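(* Let $a<b$ and let $f,g:[a,b]\to\mathbb{R}$ be continuous and differentiable (from the right) at $a$. For $a<x\le b$ write $I_f(a,x)=\frac{1}{x-a}\int_a^x f(t)\,\mathrm{d}t$ and similarly $I_g(a,x)$. If $$\bigl[f(a)\,I_g(a,b)-g(a)\,I_f(a,b)\bigr]\cdot\bigl[f'(a)\,I_g(a,b)-g'(a)\,I_f(a,b)\bigr]> 0,$$ then there exists $\xi\in(a,b)$ such that $$I_g(a,b)\bigl(f(a)-I_f(a,\xi)\bigr)=I_f(a,b)\bigl(g(a)-I_g(a,\xi)\bigr).$$ *)

theory Defs
  imports "HOL-Analysis.Analysis"
begin

definition imean :: "(real \<Rightarrow> real) \<Rightarrow> real \<Rightarrow> real \<Rightarrow> real" where
  "imean f a x = integral {a..x} f / (x - a)"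

end

theory Submission imports Defs begin

lemma key_pos:
  fixes p :: "real \<Rightarrow> real"
  assumes ab: "a < b" and cp: "continuous_on {a..b} p"
    and dp: "(p has_real_derivative D) (at_right a)" and D: "D > 0" and pa: "p a > 0"
    and m0: "imean p a b = 0"
  shows "\<exists>\<xi>. a < \<xi> \<and> \<xi> < b \<and> imean p a \<xi> = p a"
proof -
  have "((\<lambda>y. (p y - p a) / (y - a)) \<longlongrightarrow> D) (at_right a)"
    using dp by (simp add: has_field_derivative_iff)
  then have "eventually (\<lambda>y. (p y - p a) / (y - a) > D/2) (at_right a)"
    using D by (intro order_tendstoD) auto
  then obtain e where e: "e > a" and he: "\<And>y. a < y \<Longrightarrow> y < e \<Longrightarrow> (p y - p a) / (y - a) > D/2"
    unfolding eventually_at_right_field by auto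
  define x0 where "x0 = (a + min e b)/2"
  have x0: "a < x0" "x0 < b" "x0 < e" using e ab by (auto simp: x0_def)
  have sub: "{a..x0} \<subseteq> {a..b}" using x0 by auto
  have ip: "p integrable_on {a..x0}"
    using integrable_continuous_real continuous_on_subset[OF cp sub] by blast
  define F where "F t = p a * t + D/4 * (t-a)^2" for t
  have Fi: "((\<lambda>t. p a + D/2 * (t - a)) has_integral (F x0 - F a)) {a..x0}"
    apply (rule fundamental_theorem_of_calculus)
    using x0 apply simp
    unfolding F_def has_real_derivative_iff_has_vector_derivative[symmetric]
    by (auto intro!: derivative_eq_intros simp: field_simps)
  have "F x0 - F a \<le> integral {a..x0} p"
  proof (rule has_integral_le[OF Fi integrable_integral[OF ip]])
    fix t assume t: "t \<in> {a..x0}"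
    show "p a + D/2 * (t - a) \<le> p t"
    proof (cases "t = a")
      case False
      then have "a < t" "t < e" using t x0 by auto
      with he[OF this] show ?thesis by (simp add: field_simps)
    qed simp
  qed
  moreover have "F x0 - F a = p a * (x0 - a) + D/4 * (x0-a)^2"
    unfolding F_def by (simp add: algebra_simps)
  ultimately have "p a * (x0 - a) + D/4 * (x0-a)^2 \<le> integral {a..x0} p" by simp
  moreover have "D/4 * (x0-a)^2 > 0" using D x0 by simp
  ultimately have "p a * (x0 - a) < integral {a..x0} p" by linarith
  then have h0: "imean p a x0 > p a" using x0 unfolding imean_def by (simp add: field_simps)
  have cont: "continuous_on {x0..b} (\<lambda>x. imean p a x)"
  proof -
    have "continuous_on {a..b} (\<lambda>x. integral {a..x} p)"
      by (rule indefinite_integral_continuous_1) (rule integrable_continuous_real[OF cp])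
    then have "continuous_on {x0..b} (\<lambda>x. integral {a..x} p)"
      by (rule continuous_on_subset) (use x0 in auto)
    then show ?thesis unfolding imean_def
      by (intro continuous_intros) (use x0 in auto)
  qed
  obtain \<xi> where xi: "x0 \<le> \<xi>" "\<xi> \<le> b" "imean p a \<xi> = p a"
    using IVT2'[of "\<lambda>x. imean p a x" b "p a" x0] h0 m0 pa cont x0 by auto
  then have "\<xi> \<noteq> b" using m0 pa by auto
  then show ?thesis using xi x0 by (intro exI[of _ \<xi>]) auto
qed


theorem mainTheorem11:
  fixes f g :: "real \<Rightarrow> real" and a b f' g' :: real
  assumes "a < b"
    and "continuous_on {a..b} f" and "continuous_on {a..b} g"
    and "(f has_real_derivative f') (at_right a)"
    and "(g has_real_derivative g') (at_right a)"
    and "(f a * imean g a b - g a * imean f a b) * (f' * imean g a b - g' * imean f a b) > 0"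
  shows "\<exists>\<xi>. a < \<xi> \<and> \<xi> < b \<and>
           imean g a b * (f a - imean f a \<xi>) = imean f a b * (g a - imean g a \<xi>)"
proof -
  define B where "B = imean g a b"
  define A where "A = imean f a b"
  define p where "p t = B * f t - A * g t" for t
  define D where "D = B * f' - A * g'"
  have cp: "continuous_on {a..b} p" unfolding p_def using assms(2,3) by (intro continuous_intros)
  have dp: "(p has_real_derivative D) (at_right a)" unfolding p_def D_def
    using assms(4,5) by (auto intro!: derivative_eq_intros)
  have pD: "p a * D > 0" using assms(6) unfolding p_def D_def A_def B_def by (simp add: algebra_simps)
  have im: "imean p a x = B * imean f a x - A * imean g a x" if x: "a < x" "x \<le> b" for x
  proof -
    have sub: "{a..x} \<subseteq> {a..b}" using x by auto
    have "f integrable_on {a..x}" "g integrable_on {a..x}"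
      using integrable_continuous_real continuous_on_subset[OF assms(2) sub]
        continuous_on_subset[OF assms(3) sub] by blast+
    then have "integral {a..x} p = B * integral {a..x} f - A * integral {a..x} g"
      unfolding p_def by (subst integral_diff) (auto intro: integrable_on_mult_left integrable_on_mult_right)
    then show ?thesis unfolding imean_def by (simp add: diff_divide_distrib)
  qed
  have m0: "imean p a b = 0" using im[of b] assms(1) unfolding A_def B_def by simp
  have "\<exists>\<xi>. a < \<xi> \<and> \<xi> < b \<and> imean p a \<xi> = p a"
  proof (cases "D > 0")
    case True
    then have "p a > 0" using pD by (simp add: zero_less_mult_iff)
    then show ?thesis using key_pos[OF assms(1) cp dp True _ m0] by blast
  next
    case False
    then have D: "-D > 0" "-p a > 0" using pD by (auto simp: zero_less_mult_iff)
    have cq: "continuous_on {a..b} (\<lambda>t. - p t)" using cp by (intro continuous_intros)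
    have dq: "((\<lambda>t. - p t) has_real_derivative -D) (at_right a)" using dp by (auto intro!: derivative_eq_intros)
    have mn: "imean (\<lambda>t. - p t) a x = - imean p a x" for x unfolding imean_def by simp
    show ?thesis using key_pos[OF assms(1) cq dq D(1)] D(2) m0 by (simp add: mn)
  qed
  then obtain \<xi> where xi: "a < \<xi>" "\<xi> < b" "imean p a \<xi> = p a" by blast
  then have "B * (f a - imean f a \<xi>) = A * (g a - imean g a \<xi>)"
    using im[of \<xi>] unfolding p_def by (simp add: algebra_simps)
  then show ?thesis using xi unfolding A_def B_def by blast
qed

end
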